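(* Let $(C,\delta,P)$ be a chain complex with involution over $\mathbb{Z}_D$. Let $\mathcal{V}\le C$ be a subspace and $\mathcal{V}^>$ a direct complement of it, and let $W,W^>:C\to C$ be the projections onto $\mathcal{V}$ and $\mathcal{V}^>$ corresponding to the decomposition $C=\mathcal{V}\oplus\mathcal{V}^>$. Suppose $PW=WP$. Let $S^>=W\delta(\mathcal{V}^>)$, $\mathcal{V}'=\mathcal{V}/S^>$, and define $\varphi:C\to\mathcal{V}'$ by $\varphi(h)=Wh+S^>$. Then the maps $\delta',P':\mathcal{V}'\to\mathcal{V}'$ given by $\delta'(x+S^>)=\varphi(\delta(x))$ and $P'(x+S^>)=\varphi(P(x))$ (for $x\in\mathcal{V}$) are well defined, $(\mathcal{V}',\delta',P')$ is a chain complex with involution, and $\varphi$ is a chain map ($\delta'\varphi=\varphi\delta$) satisfying $\varphi P=P'\varphi$. Moreover, $\ker\delta'=\varphi(\delta^{-1}(\mathcal{V}^>))$ and $\operatorname{im}\delta'=\varphi(\operatorname{im}\delta)$.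
   Context: $D$ is an odd prime and $\mathbb{Z}_D$ the field with $D$ elements. A chain complex with involution over $\mathbb{Z}_D$ is a triple $(C,\partial,P)$ where $C$ is a $\mathbb{Z}_D$-vector space and $\partial,P:C\to C$ are linear maps with $\partial^2=0$, $P^2=I$ and $\partial P+P\partial=0$. $\delta^{-1}(\mathcal{V}^>)$ denotes the preimage $\{x\in C:\delta x\in\mathcal{V}^>\}$. *)

theory Defs
  imports Complex_Main "HOL-Computational_Algebra.Primes"
begin

definition chain_cx_inv ::
  "('k::field \<Rightarrow> 'v::ab_group_add \<Rightarrow> 'v) \<Rightarrow> ('v \<Rightarrow> 'v) \<Rightarrow> ('v \<Rightarrow> 'v) \<Rightarrow> bool" where
  "chain_cx_inv scale d P \<longleftrightarrow>
     Vector_Spaces.linear scale scale d \<and> Vector_Spaces.linear scale scale P \<and>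
     (\<forall>x. d (d x) = 0) \<and> (\<forall>x. P (P x) = x) \<and> (\<forall>x. d (P x) + P (d x) = 0)"

text \<open>Cosets x + S and the quotient V / S (as the set of cosets of elements of V),
  with its vector space operations; the zero of the quotient is the coset S itself.\<close>
definition coset :: "'v::ab_group_add set \<Rightarrow> 'v \<Rightarrow> 'v set" where
  "coset S x = {x + s | s. s \<in> S}"

definition quot :: "'v::ab_group_add set \<Rightarrow> 'v set \<Rightarrow> 'v set set" where
  "quot V S = coset S ` V"

definition qadd :: "'v::ab_group_add set \<Rightarrow> 'v set \<Rightarrow> 'v set" where
  "qadd X Y = {x + y | x y. x \<in> X \<and> y \<in> Y}"

definition qscale :: "('k \<Rightarrow> 'v::ab_group_add \<Rightarrow> 'v) \<Rightarrow> 'v set \<Rightarrow> 'k \<Rightarrow> 'v set \<Rightarrow> 'v set" where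
  "qscale scale S c X = {scale c x + s | x s. x \<in> X \<and> s \<in> S}"

definition quot_chain_cx_inv ::
  "('k \<Rightarrow> 'v::ab_group_add \<Rightarrow> 'v) \<Rightarrow> 'v set \<Rightarrow> 'v set \<Rightarrow> ('v set \<Rightarrow> 'v set) \<Rightarrow> ('v set \<Rightarrow> 'v set) \<Rightarrow> bool" where
  "quot_chain_cx_inv scale V S d P \<longleftrightarrow>
     (\<forall>X\<in>quot V S. d X \<in> quot V S \<and> P X \<in> quot V S) \<and>
     (\<forall>X\<in>quot V S. \<forall>Y\<in>quot V S. d (qadd X Y) = qadd (d X) (d Y) \<and> P (qadd X Y) = qadd (P X) (P Y)) \<and>
     (\<forall>c. \<forall>X\<in>quot V S. d (qscale scale S c X) = qscale scale S c (d X) \<and>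
                        P (qscale scale S c X) = qscale scale S c (P X)) \<and>
     (\<forall>X\<in>quot V S. d (d X) = S) \<and> (\<forall>X\<in>quot V S. P (P X) = X) \<and>
     (\<forall>X\<in>quot V S. qadd (d (P X)) (P (d X)) = S)"

definition induced :: "'v::ab_group_add set \<Rightarrow> 'v set \<Rightarrow> ('v \<Rightarrow> 'v) \<Rightarrow> ('v \<Rightarrow> 'v) \<Rightarrow> 'v set \<Rightarrow> 'v set" where
  "induced V S W f X = coset S (W (f (SOME x. x \<in> V \<and> X = coset S x)))"

end

theory Submission
  imports Defs
begin

theorem lemma2:
  fixes scale :: "'k::field \<Rightarrow> 'v::ab_group_add \<Rightarrow> 'v"
    and D :: nat
    and d P W Wg :: "'v \<Rightarrow> 'v"
    and V Vg S :: "'v set"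
  assumes "card (UNIV :: 'k set) = D" and "prime D" and "odd D"
    and "vector_space scale"
    and "chain_cx_inv scale d P"
    and "module.subspace scale V" and "module.subspace scale Vg"
    and "V \<inter> Vg = {0}" and "\<forall>x. \<exists>v\<in>V. \<exists>w\<in>Vg. x = v + w"
    and "\<forall>x. W x \<in> V \<and> Wg x \<in> Vg \<and> x = W x + Wg x"
    and "\<forall>x. P (W x) = W (P x)"
    and "S = W ` d ` Vg"
  defines "\<phi> \<equiv> (\<lambda>h. coset S (W h))"
    and "d' \<equiv> induced V S W d"
    and "P' \<equiv> induced V S W P"
  shows "(\<forall>x\<in>V. \<forall>y\<in>V. coset S x = coset S y \<longrightarrow> \<phi> (d x) = \<phi> (d y) \<and> \<phi> (P x) = \<phi> (P y))
    \<and> (\<forall>x\<in>V. d' (coset S x) = \<phi> (d x) \<and> P' (coset S x) = \<phi> (P x))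
    \<and> quot_chain_cx_inv scale V S d' P'
    \<and> (\<forall>h. d' (\<phi> h) = \<phi> (d h)) \<and> (\<forall>h. \<phi> (P h) = P' (\<phi> h))
    \<and> {X \<in> quot V S. d' X = S} = \<phi> ` {x. d x \<in> Vg}
    \<and> d' ` quot V S = \<phi> ` range d"
proof -
  note a = assms
  have M: "module scale" using a(4) by (simp add: module_iff_vector_space)
  have dh: "module_hom scale scale d" and Ph: "module_hom scale scale P"
    using a(5) by (auto simp: chain_cx_inv_def linear_iff_module_hom)
  have dd: "\<And>x. d (d x) = 0" and PP: "\<And>x. P (P x) = x" and dP: "\<And>x. d (P x) + P (d x) = 0"
    using a(5) by (auto simp: chain_cx_inv_def)
  have dadd: "\<And>x y. d (x + y) = d x + d y" and dsc: "\<And>c x. d (scale c x) = scale c (d x)"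
    and ddiff: "\<And>x y. d (x - y) = d x - d y" and dneg: "\<And>x. d (- x) = - d x"
    using module_hom.add[OF dh] module_hom.scale[OF dh] module_hom.diff[OF dh] module_hom.neg[OF dh] by auto
  have Padd: "\<And>x y. P (x + y) = P x + P y" and Psc: "\<And>c x. P (scale c x) = scale c (P x)"
    and Pdiff: "\<And>x y. P (x - y) = P x - P y" and Pneg: "\<And>x. P (- x) = - P x"
    using module_hom.add[OF Ph] module_hom.scale[OF Ph] module_hom.diff[OF Ph] module_hom.neg[OF Ph] by auto
  have V0: "0 \<in> V" and Vadd: "\<And>x y. x \<in> V \<Longrightarrow> y \<in> V \<Longrightarrow> x + y \<in> V"
    and Vsc: "\<And>c x. x \<in> V \<Longrightarrow> scale c x \<in> V" and Vdiff: "\<And>x y. x \<in> V \<Longrightarrow> y \<in> V \<Longrightarrow> x - y \<in> V"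
    and Vneg: "\<And>x. x \<in> V \<Longrightarrow> - x \<in> V"
    using module.subspace_0[OF M a(6)] module.subspace_add[OF M a(6)] module.subspace_scale[OF M a(6)]
      module.subspace_diff[OF M a(6)] module.subspace_neg[OF M a(6)] by auto
  have G0: "0 \<in> Vg" and Gadd: "\<And>x y. x \<in> Vg \<Longrightarrow> y \<in> Vg \<Longrightarrow> x + y \<in> Vg"
    and Gsc: "\<And>c x. x \<in> Vg \<Longrightarrow> scale c x \<in> Vg" and Gdiff: "\<And>x y. x \<in> Vg \<Longrightarrow> y \<in> Vg \<Longrightarrow> x - y \<in> Vg"
    and Gneg: "\<And>x. x \<in> Vg \<Longrightarrow> - x \<in> Vg"
    using module.subspace_0[OF M a(7)] module.subspace_add[OF M a(7)] module.subspace_scale[OF M a(7)]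
      module.subspace_diff[OF M a(7)] module.subspace_neg[OF M a(7)] by auto
  have WV: "\<And>x. W x \<in> V" and WG: "\<And>x. Wg x \<in> Vg" and Wdec: "\<And>x. x = W x + Wg x" using a(10) by auto
  have uniq: "W x = v" if "v \<in> V" "w \<in> Vg" "x = v + w" for x v w
  proof -
    have "W x - v = w - Wg x" using Wdec[of x] that(3) by (simp add: algebra_simps)
    moreover have "W x - v \<in> V" using Vdiff WV that by auto
    moreover have "w - Wg x \<in> Vg" using Gdiff WG that by auto
    ultimately have "W x - v \<in> V \<inter> Vg" by simp
    thus ?thesis using a(8) by simp
  qed
  have Wv: "\<And>v. v \<in> V \<Longrightarrow> W v = v" using uniq G0 by fastforce
  have Wg0: "\<And>w. w \<in> Vg \<Longrightarrow> W w = 0" using uniq V0 by fastforce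
  have WW: "\<And>x. W (W x) = W x" using Wv WV by blast
  have Wadd: "W (x + y) = W x + W y" for x y
    by (rule uniq[where w="Wg x + Wg y"]) (use Vadd Gadd WV WG Wdec[of x] Wdec[of y] in \<open>auto simp: algebra_simps\<close>)
  have Wsc: "W (scale c x) = scale c (W x)" for c x
  proof (rule uniq[where w="scale c (Wg x)"])
    show "scale c x = scale c (W x) + scale c (Wg x)"
      using Wdec[of x] module.scale_right_distrib[OF M] by metis
  qed (use Vsc Gsc WV WG in auto)
  have W0: "W 0 = 0" using Wv V0 by blast
  have Wneg: "W (- x) = - W x" for x using Wadd[of x "-x"] W0 by (simp add: add_eq_0_iff)
  have Wdiff: "W (x - y) = W x - W y" for x y using Wadd[of x "-y"] Wneg[of y] by simp
  have Wgeq: "Wg x = x - W x" for x using Wdec[of x] by (simp add: algebra_simps)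
  have PG: "P g \<in> Vg" if "g \<in> Vg" for g
  proof -
    have "W (P g) = P (W g)" using a(11) by simp
    also have "\<dots> = 0" using Wg0[OF that] module_hom.zero[OF Ph] by simp
    finally have "Wg (P g) = P g" using Wgeq[of "P g"] by (metis diff_zero)
    thus ?thesis using WG[of "P g"] by metis
  qed
  have Sm: "s \<in> S \<longleftrightarrow> (\<exists>g\<in>Vg. s = W (d g))" for s using a(12) by auto
  have SV: "\<And>s. s \<in> S \<Longrightarrow> s \<in> V" using Sm WV by auto
  have SWd: "\<And>g. g \<in> Vg \<Longrightarrow> W (d g) \<in> S" using Sm by blast
  have S0: "0 \<in> S" using SWd G0 module_hom.zero[OF dh] W0 by metis
  have Sadd: "x + y \<in> S" if xs: "x \<in> S" "y \<in> S" for x y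
  proof -
    obtain g where "g \<in> Vg" "x = W (d g)" using xs(1) Sm[of x] by auto
    moreover obtain h where "h \<in> Vg" "y = W (d h)" using xs(2) Sm[of y] by auto
    ultimately have "x + y = W (d (g + h))" by (simp add: dadd Wadd)
    thus ?thesis using SWd[of "g + h"] Gadd \<open>g \<in> Vg\<close> \<open>h \<in> Vg\<close> by metis
  qed
  have Ssc: "scale c x \<in> S" if xs: "x \<in> S" for c x
  proof -
    obtain g where "g \<in> Vg" "x = W (d g)" using xs Sm[of x] by auto
    hence "scale c x = W (d (scale c g))" by (simp add: dsc Wsc)
    thus ?thesis using SWd[of "scale c g"] Gsc \<open>g \<in> Vg\<close> by metis
  qed
  have Sneg: "- x \<in> S" if xs: "x \<in> S" for x
  proof -
    obtain g where "g \<in> Vg" "x = W (d g)" using xs Sm[of x] by auto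
    hence "- x = W (d (- g))" by (simp add: dneg Wneg)
    thus ?thesis using SWd[of "- g"] Gneg \<open>g \<in> Vg\<close> by metis
  qed
  have Sdiff: "x - y \<in> S" if "x \<in> S" "y \<in> S" for x y
    using Sadd[OF that(1) Sneg[OF that(2)]] by simp
  have SdS: "W (d s) \<in> S" if ss: "s \<in> S" for s
  proof -
    obtain g where g: "g \<in> Vg" "s = W (d g)" using ss Sm[of s] by auto
    have "d s = d (d g - Wg (d g))" using g Wgeq by simp
    also have "\<dots> = d (- Wg (d g))" using ddiff dd dneg by simp
    finally show ?thesis using SWd[of "- Wg (d g)"] Gneg WG by auto
  qed
  have SPS: "W (P s) \<in> S" if ss: "s \<in> S" for s
  proof -
    obtain g where g: "g \<in> Vg" "s = W (d g)" using ss Sm[of s] by auto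
    have "W (P s) = W (P (d g))" using g a(11) WW by metis
    also have "P (d g) = d (- P g)" using dP[of g] dneg by (simp add: add_eq_0_iff)
    finally show ?thesis using SWd[of "- P g"] Gneg PG g by auto
  qed
  have SdW: "W (d (W h)) - W (d h) \<in> S" for h
  proof -
    have e: "W h - h = - Wg h" using Wgeq[of h] by simp
    have "W (d (W h)) - W (d h) = W (d (W h - h))" by (simp add: ddiff Wdiff)
    hence "W (d (W h)) - W (d h) = W (d (- Wg h))" by (simp only: e)
    thus ?thesis using SWd[of "- Wg h"] Gneg WG by auto
  qed
  have cmem: "z \<in> coset S x \<longleftrightarrow> z - x \<in> S" for z x
  proof
    assume "z \<in> coset S x"
    then obtain s where "s \<in> S" "z = x + s" unfolding coset_def by blast
    thus "z - x \<in> S" by simp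
  next
    assume "z - x \<in> S"
    moreover have "z = x + (z - x)" by simp
    ultimately show "z \<in> coset S x" unfolding coset_def by blast
  qed
  have cos_eq: "coset S x = coset S y \<longleftrightarrow> x - y \<in> S" for x y
  proof
    assume "coset S x = coset S y"
    moreover have "x \<in> coset S x" using cmem S0 by simp
    ultimately show "x - y \<in> S" using cmem by simp
  next
    assume h: "x - y \<in> S"
    show "coset S x = coset S y"
    proof (rule set_eqI)
      fix z
      have e1: "z - y = (z - x) + (x - y)" and e2: "z - x = (z - y) - (x - y)" by simp_all
      show "z \<in> coset S x \<longleftrightarrow> z \<in> coset S y"
        unfolding cmem using Sadd[OF _ h, of "z - x"] Sdiff[OF _ h, of "z - y"] e1 e2 by metis
    qed
  qed
  have cosS: "coset S s = S" if ss: "s \<in> S" for s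
  proof (rule set_eqI)
    fix z
    show "z \<in> coset S s \<longleftrightarrow> z \<in> S"
      unfolding cmem using Sdiff[OF _ ss, of z] Sadd[OF _ ss, of "z - s"] by (metis diff_add_cancel)
  qed
  have qadd_c: "qadd (coset S x) (coset S y) = coset S (x + y)" for x y
  proof (rule set_eqI)
    fix z
    show "z \<in> qadd (coset S x) (coset S y) \<longleftrightarrow> z \<in> coset S (x + y)"
    proof
      assume "z \<in> qadd (coset S x) (coset S y)"
      then obtain p q where pq: "z = p + q" "p - x \<in> S" "q - y \<in> S" unfolding qadd_def cmem by blast
      have "z - (x + y) = (p - x) + (q - y)" using pq(1) by simp
      thus "z \<in> coset S (x + y)" unfolding cmem using Sadd[OF pq(2,3)] by metis
    next
      assume h: "z \<in> coset S (x + y)"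
      have "z = (x + (z - (x + y))) + y" by simp
      moreover have "x + (z - (x + y)) \<in> coset S x" unfolding cmem using h cmem by (simp add: diff_diff_eq add.commute)
      moreover have "y \<in> coset S y" unfolding cmem using S0 by simp
      ultimately show "z \<in> qadd (coset S x) (coset S y)" unfolding qadd_def by blast
    qed
  qed
  have qscale_c: "qscale scale S c (coset S x) = coset S (scale c x)" for c x
  proof (rule set_eqI)
    fix z
    show "z \<in> qscale scale S c (coset S x) \<longleftrightarrow> z \<in> coset S (scale c x)"
    proof
      assume "z \<in> qscale scale S c (coset S x)"
      then obtain p t where pt: "z = scale c p + t" "p - x \<in> S" "t \<in> S" unfolding qscale_def cmem by blast
      have "z - scale c x = scale c (p - x) + t" using pt(1)
        by (simp add: module.scale_right_diff_distrib[OF M])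
      thus "z \<in> coset S (scale c x)" unfolding cmem using Sadd[OF Ssc[OF pt(2)] pt(3)] by metis
    next
      assume h: "z \<in> coset S (scale c x)"
      have "z = scale c x + (z - scale c x)" by simp
      moreover have "x \<in> coset S x" unfolding cmem using S0 by simp
      moreover have "z - scale c x \<in> S" using h cmem by simp
      ultimately show "z \<in> qscale scale S c (coset S x)" unfolding qscale_def by blast
    qed
  qed
  have keyd: "coset S (W (d x)) = coset S (W (d y))" if "coset S x = coset S y" for x y
  proof -
    have "x - y \<in> S" using that cos_eq by simp
    hence "W (d (x - y)) \<in> S" by (rule SdS)
    thus ?thesis using cos_eq ddiff Wdiff by simp
  qed
  have keyP: "coset S (W (P x)) = coset S (W (P y))" if "coset S x = coset S y" for x y
  proof -
    have "x - y \<in> S" using that cos_eq by simp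
    hence "W (P (x - y)) \<in> S" by (rule SPS)
    thus ?thesis using cos_eq Pdiff Wdiff by simp
  qed
  have ind: "induced V S W f (coset S x) = coset S (W (f x))"
    if "x \<in> V" "\<And>x y. coset S x = coset S y \<Longrightarrow> coset S (W (f x)) = coset S (W (f y))" for f x y
  proof -
    let ?y = "SOME y. y \<in> V \<and> coset S x = coset S y"
    have "?y \<in> V \<and> coset S x = coset S ?y" by (rule someI[of _ x]) (use that in auto)
    thus ?thesis unfolding induced_def using that(2) by metis
  qed
  have d'c: "d' (coset S x) = \<phi> (d x)" if "x \<in> V" for x
    unfolding d'_def \<phi>_def using ind[where f=d, OF that keyd] by blast
  have P'c: "P' (coset S x) = \<phi> (P x)" if "x \<in> V" for x
    unfolding P'_def \<phi>_def using ind[where f=P, OF that keyP] by blast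
  have phi: "\<phi> h = coset S (W h)" for h unfolding \<phi>_def by simp
  have qall: "(\<forall>X\<in>quot V S. Q X) \<longleftrightarrow> (\<forall>x\<in>V. Q (coset S x))" for Q
    by (auto simp: quot_def)
  have qin: "coset S x \<in> quot V S" if "x \<in> V" for x using that by (auto simp: quot_def)
  have part4: "d' (\<phi> h) = \<phi> (d h)" for h
  proof -
    have "d' (\<phi> h) = coset S (W (d (W h)))" using d'c[OF WV[of h]] phi by simp
    also have "\<dots> = coset S (W (d h))" using cos_eq SdW by simp
    finally show ?thesis using phi by simp
  qed
  have part5: "\<phi> (P h) = P' (\<phi> h)" for h
    using P'c[OF WV[of h]] phi a(11) WW by metis
  have WPW: "W (P (W z)) = W (P z)" for z using a(11) WW by metis
  have quotcx: "quot_chain_cx_inv scale V S d' P'"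
    unfolding quot_chain_cx_inv_def qall
  proof (intro conjI ballI allI)
    fix x assume x: "x \<in> V"
    show "d' (coset S x) \<in> quot V S" using d'c[OF x] phi qin WV by simp
    show "P' (coset S x) \<in> quot V S" using P'c[OF x] phi qin WV by simp
    show "d' (d' (coset S x)) = S"
    proof -
      have "d' (d' (coset S x)) = coset S (W (d (W (d x))))" using d'c[OF x] d'c[OF WV] phi by simp
      moreover have "W (d (W (d x))) - W (d (d x)) \<in> S" by (rule SdW)
      moreover have "W (d (d x)) = 0" using dd W0 by simp
      ultimately show ?thesis using cosS by simp
    qed
    show "P' (P' (coset S x)) = coset S x"
    proof -
      have "P' (P' (coset S x)) = coset S (W (P (W (P x))))" using P'c[OF x] P'c[OF WV] phi by simp
      also have "W (P (W (P x))) = x" using WPW PP Wv[OF x] by simp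
      finally show ?thesis .
    qed
    show "qadd (d' (P' (coset S x))) (P' (d' (coset S x))) = S"
    proof -
      have "qadd (d' (P' (coset S x))) (P' (d' (coset S x)))
          = coset S (W (d (W (P x))) + W (P (W (d x))))"
        using P'c[OF x] d'c[OF x] P'c[OF WV] d'c[OF WV] phi qadd_c by simp
      moreover have "W (d (W (P x))) + W (P (W (d x))) = (W (d (W (P x))) - W (d (P x))) + W (d (P x) + P (d x))"
        using WPW Wadd by (simp add: algebra_simps)
      moreover have "W (d (P x) + P (d x)) = 0" using dP W0 by simp
      moreover have "W (d (W (P x))) - W (d (P x)) \<in> S" by (rule SdW)
      ultimately show ?thesis using cosS by simp
    qed
  next
    fix x y assume x: "x \<in> V" and y: "y \<in> V"
    show "d' (qadd (coset S x) (coset S y)) = qadd (d' (coset S x)) (d' (coset S y))"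
      using qadd_c d'c x y Vadd phi dadd Wadd by simp
    show "P' (qadd (coset S x) (coset S y)) = qadd (P' (coset S x)) (P' (coset S y))"
      using qadd_c P'c x y Vadd phi Padd Wadd by simp
  next
    fix c x assume x: "x \<in> V"
    show "d' (qscale scale S c (coset S x)) = qscale scale S c (d' (coset S x))"
      using qscale_c d'c x Vsc phi dsc Wsc by simp
    show "P' (qscale scale S c (coset S x)) = qscale scale S c (P' (coset S x))"
      using qscale_c P'c x Vsc phi Psc Wsc by simp
  qed
  have part6: "{X \<in> quot V S. d' X = S} = \<phi> ` {x. d x \<in> Vg}"
  proof (rule set_eqI, rule iffI)
    fix X assume "X \<in> {X \<in> quot V S. d' X = S}"
    then obtain x where x: "x \<in> V" "X = coset S x" "d' X = S" by (auto simp: quot_def)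
    have "coset S (W (d x)) = coset S 0" using x d'c phi cosS S0 by simp
    hence "W (d x) \<in> S" using cos_eq by simp
    then obtain g where g: "g \<in> Vg" "W (d x) = W (d g)" using Sm by blast
    have "W (d (x - g)) = 0" using g ddiff Wdiff by simp
    hence "d (x - g) \<in> Vg" using Wgeq[of "d (x - g)"] WG[of "d (x - g)"] by simp
    moreover have "\<phi> (x - g) = X" using phi Wdiff Wg0[OF g(1)] Wv[OF x(1)] x(2) by simp
    ultimately show "X \<in> \<phi> ` {x. d x \<in> Vg}" by blast
  next
    fix X assume "X \<in> \<phi> ` {x. d x \<in> Vg}"
    then obtain x where x: "d x \<in> Vg" "X = \<phi> x" by blast
    have "X \<in> quot V S" using x phi qin WV by simp
    moreover have "d' X = S" using x part4 phi Wg0 cosS S0 by simp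
    ultimately show "X \<in> {X \<in> quot V S. d' X = S}" by simp
  qed
  have part7: "d' ` quot V S = \<phi> ` range d"
  proof (rule set_eqI, rule iffI)
    fix Y assume "Y \<in> d' ` quot V S"
    then obtain x where "x \<in> V" "Y = d' (coset S x)" by (auto simp: quot_def)
    thus "Y \<in> \<phi> ` range d" using d'c by auto
  next
    fix Y assume "Y \<in> \<phi> ` range d"
    then obtain h where "Y = \<phi> (d h)" by auto
    hence "Y = d' (\<phi> h)" using part4 by simp
    moreover have "\<phi> h \<in> quot V S" using phi qin WV by simp
    ultimately show "Y \<in> d' ` quot V S" by blast
  qed
  have part1: "\<forall>x\<in>V. \<forall>y\<in>V. coset S x = coset S y \<longrightarrow> \<phi> (d x) = \<phi> (d y) \<and> \<phi> (P x) = \<phi> (P y)"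
    using keyd keyP unfolding phi by blast
  have part2: "\<forall>x\<in>V. d' (coset S x) = \<phi> (d x) \<and> P' (coset S x) = \<phi> (P x)"
    using d'c P'c by blast
  show ?thesis
    using part1 part2 quotcx part4 part5 part6 part7 by (intro conjI allI) blast+
qed

end
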